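(* Let $K$ be a simplicial complex with weight function $w_K\equiv1$, and let $L$ be a subcomplex of $K$ with $S_n(L)=S_n(K)$, equipped with a weight function $w_L$ taking values in $\{0,1\}$. Let $\theta_1\le\theta_2\le\dots$ and $\lambda_1\le\lambda_2\le\dots$ be the eigenvalues of $\mathcal{L}^{up}_n(L,w_L)$ and $\mathcal{L}^{up}_n(K,w_K)$, respectively. Then $\theta_k\le\lambda_k$ for every $k$.
   Context: $S_j(K)$ is the set of $j$-faces; $C^j(K,\mathbb{R})$ the real cochains on oriented $j$-faces, coboundary $(\delta_j f)([v_0,\dots,v_{j+1}])=\sum_i(-1)^if([v_0,\dots,\hat v_i,\dots,v_{j+1}])$. For a weight function $w\ge0$ on faces, $(f,g)=\sum_{F\in S_j}w(F)f([F])g([F])$ and the formal adjoint is $(\delta_j^*\bar f)([F])=\sum_{\bar F\in S_{j+1},\bar F\supset F}\frac{w(\bar F)}{w(F)}\mathrm{sgn}([F],\partial[\bar F])\bar f([\bar F])$ if $w(F)\ne0$, and $0$ if $w(F)=0$, where $\mathrm{sgn}([v_0,..,\hat v_i,..,v_{j+1}],\partial[v_0,..,v_{j+1}])=(-1)^i$. The up-Laplacian is $\mathcal{L}^{up}_n(K,w)=\delta_n^*\delta_n$ on $C^n$; with $w\equiv1$ it is the combinatorial up-Laplacian. Both Laplacians act on $n$-cochains of spaces of the same dimension $|S_n(K)|$. *)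

theory Defs
  imports "Jordan_Normal_Form.Char_Poly"
begin

text \<open>The orientation
 of a face is the one given by listing its vertices in increasing order.\<close>

definition simplicial_complex :: "'v set set \<Rightarrow> bool" where
  "simplicial_complex K \<longleftrightarrow> finite K \<and>
     (\<forall>F\<in>K. finite F \<and> F \<noteq> {}) \<and>
     (\<forall>F\<in>K. \<forall>G. G \<subseteq> F \<longrightarrow> G \<noteq> {} \<longrightarrow> G \<in> K)"

definition subcomplex :: "'v set set \<Rightarrow> 'v set set \<Rightarrow> bool" where
  "subcomplex L K \<longleftrightarrow> simplicial_complex L \<and> L \<subseteq> K"

definition faces :: "nat \<Rightarrow> 'v set set \<Rightarrow> 'v set set" where
  "faces j K = {F \<in> K. card F = j + 1}"

text \<open>Position (0-based) of vertex v in the increasingly ordered face Fb.\<close>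
definition vpos :: "'v::linorder set \<Rightarrow> 'v \<Rightarrow> nat" where
  "vpos Fb v = card {u \<in> Fb. u < v}"

text \<open>Coboundary: \<open>(\<delta> f)[v_0..v_{j+1}] = \<Sum>_i (-1)^i f[v_0..\<hat>v_i..v_{j+1}]\<close>.
 Cochains are real functions on (positively oriented) faces.\<close>
definition coboundary :: "('v::linorder set \<Rightarrow> real) \<Rightarrow> 'v set \<Rightarrow> real" where
  "coboundary f Fb = (\<Sum>v\<in>Fb. (-1) ^ vpos Fb v * f (Fb - {v}))"

text \<open>\<open>sgn([F], \<partial>[Fb])\<close> for F a facet of Fb.\<close>
definition bsign :: "'v::linorder set \<Rightarrow> 'v set \<Rightarrow> real" where
  "bsign F Fb = (-1) ^ vpos Fb (the_elem (Fb - F))"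

text \<open>Formal adjoint \<open>\<delta>_j^*\<close> w.r.t. the weight w on the complex K.\<close>
definition coboundary_adj ::
  "'v::linorder set set \<Rightarrow> ('v set \<Rightarrow> real) \<Rightarrow> nat \<Rightarrow> ('v set \<Rightarrow> real) \<Rightarrow> 'v set \<Rightarrow> real" where
  "coboundary_adj K w j g F =
     (if w F \<noteq> 0 then
        (\<Sum>Fb\<in>{Fb \<in> faces (j + 1) K. F \<subset> Fb}. w Fb / w F * bsign F Fb * g Fb)
      else 0)"

definition up_laplacian ::
  "'v::linorder set set \<Rightarrow> ('v set \<Rightarrow> real) \<Rightarrow> nat \<Rightarrow> ('v set \<Rightarrow> real) \<Rightarrow> 'v set \<Rightarrow> real" where
  "up_laplacian K w n f = coboundary_adj K w n (coboundary f)"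

definition face_enum :: "nat \<Rightarrow> 'v set set \<Rightarrow> 'v set list" where
  "face_enum n K = (SOME xs. distinct xs \<and> set xs = faces n K)"

definition up_laplacian_mat ::
  "'v::linorder set set \<Rightarrow> ('v set \<Rightarrow> real) \<Rightarrow> nat \<Rightarrow> real mat" where
  "up_laplacian_mat K w n =
     (let xs = face_enum n K; N = length xs in
      mat N N (\<lambda>(i, j). up_laplacian K w n (\<lambda>F. if F = xs ! j then 1 else 0) (xs ! i)))"

definition eigenvalues_sorted :: "real mat \<Rightarrow> real list" where
  "eigenvalues_sorted A = sorted_list_of_multiset (proots (char_poly A))"

end

theory Submission
  imports Defs "Jordan_Normal_Form.Schur_Decomposition"
begin



lemma symm_real_root:
  fixes A :: "real mat"
  assumes A: "A \<in> carrier_mat n n"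
    and sym: "\<And>i j. i < n \<Longrightarrow> j < n \<Longrightarrow> A $$ (i,j) = A $$ (j,i)"
    and n: "0 < n"
  shows "\<exists>r. poly (char_poly A) r = 0"
proof -
  define Ac where "Ac = map_mat complex_of_real A"
  have Ac: "Ac \<in> carrier_mat n n" using A unfolding Ac_def by auto
  have cp: "char_poly Ac = map_poly of_real (char_poly A)"
    unfolding Ac_def by (rule of_real_hom.char_poly_hom[OF A])
  have "degree (char_poly Ac) = n" using degree_monic_char_poly[OF Ac] by auto
  then have "\<not> constant (poly (char_poly Ac))" using n by (simp add: constant_degree)
  then obtain a where a: "poly (char_poly Ac) a = 0" using fundamental_theorem_of_algebra by blast
  then have "eigenvalue Ac a" using eigenvalue_root_char_poly[OF Ac] by simp
  then obtain v where v: "v \<in> carrier_vec n" "v \<noteq> 0\<^sub>v n" "Ac *\<^sub>v v = a \<cdot>\<^sub>v v"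
    unfolding eigenvalue_def eigenvector_def using Ac by auto
  have ev: "(\<Sum>j<n. complex_of_real (A $$ (i,j)) * v $ j) = a * v $ i" if i: "i < n" for i
  proof -
    have "(Ac *\<^sub>v v) $ i = a * v $ i" using v(3) i v(1) by simp
    moreover have "(Ac *\<^sub>v v) $ i = (\<Sum>j<n. complex_of_real (A $$ (i,j)) * v $ j)"
      using i A v(1) by (auto simp: Ac_def scalar_prod_def row_def atLeast0LessThan)
    ultimately show ?thesis by simp
  qed
  define S where "S = (\<Sum>i<n. cnj (v $ i) * (\<Sum>j<n. complex_of_real (A $$ (i,j)) * v $ j))"
  define N where "N = (\<Sum>i<n. cnj (v $ i) * v $ i)"
  have SN: "S = a * N" unfolding S_def N_def using ev by (simp add: sum_distrib_left mult_ac)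
  have "cnj S = (\<Sum>i<n. v $ i * (\<Sum>j<n. complex_of_real (A $$ (i,j)) * cnj (v $ j)))"
    unfolding S_def by (simp add: cnj_sum)
  also have "\<dots> = (\<Sum>i<n. \<Sum>j<n. complex_of_real (A $$ (i,j)) * v $ i * cnj (v $ j))"
    by (simp add: sum_distrib_left mult_ac)
  also have "\<dots> = (\<Sum>j<n. \<Sum>i<n. complex_of_real (A $$ (i,j)) * v $ i * cnj (v $ j))"
    by (rule sum.swap)
  also have "\<dots> = (\<Sum>j<n. \<Sum>i<n. complex_of_real (A $$ (j,i)) * v $ i * cnj (v $ j))"
    using sym by (intro sum.cong refl) auto
  also have "\<dots> = S" unfolding S_def by (simp add: sum_distrib_left mult_ac)
  finally have cS: "cnj S = S" .
  have Nr: "N = complex_of_real (\<Sum>i<n. (cmod (v $ i))^2)"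
  proof -
    have "cnj (v $ i) * v $ i = complex_of_real ((cmod (v $ i))^2)" for i
      by (subst complex_norm_square) (simp add: mult.commute)
    then show ?thesis unfolding N_def of_real_sum by simp
  qed
  have "\<exists>i<n. v $ i \<noteq> 0" using v(1,2) by (auto simp: vec_eq_iff)
  then obtain i where i: "i < n" "v $ i \<noteq> 0" by auto
  have "(\<Sum>i<n. (cmod (v $ i))^2) > 0"
    by (rule sum_pos2[of _ i]) (use i in auto)
  then have N0: "N \<noteq> 0" unfolding Nr by (metis of_real_eq_0_iff less_irrefl)
  have cN: "cnj N = N" unfolding Nr by (rule complex_cnj_complex_of_real)
  have "cnj a * N = a * N" using cS SN cN by (metis complex_cnj_mult)
  then have "cnj a = a" using N0 by simp
  then have "Im (cnj a) = Im a" by simp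
  then have "Im a = 0" by simp
  then have aR: "a = complex_of_real (Re a)" by (simp add: complex_eq_iff)
  have "complex_of_real (poly (char_poly A) (Re a)) = poly (map_poly of_real (char_poly A)) (complex_of_real (Re a))"
    by (rule of_real_hom.poly_map_poly[symmetric])
  also have "\<dots> = 0" using a unfolding cp aR[symmetric] .
  finally have "complex_of_real (poly (char_poly A) (Re a)) = 0" .
  then show ?thesis by auto
qed



lemma orth_completion:
  fixes v :: "real vec"
  assumes v: "v \<in> carrier_vec n" and v0: "v \<noteq> 0\<^sub>v n"
  shows "\<exists>W \<in> carrier_mat n n. transpose_mat W * W = 1\<^sub>m n \<and> (\<exists>c. c \<noteq> 0 \<and> col W 0 = c \<cdot>\<^sub>v v)"
proof -
  interpret cof_vec_space n "TYPE(real)" .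
  define b where "b = basis_completion v"
  define ws where "ws = gram_schmidt n b"
  from basis_completion[OF v v0, folded b_def]
  have dist_b: "distinct b" and indep: "\<not> lin_dep (set b)" and b: "set b \<subseteq> carrier_vec n"
    and hdb: "hd b = v" and len_b: "length b = n" by auto
  have n: "n \<noteq> 0" using v v0 by auto
  from hdb len_b n obtain vs where bv: "b = v # vs" by (cases b, auto)
  from gram_schmidt_result[OF b dist_b indep refl, folded ws_def]
  have ws: "set ws \<subseteq> carrier_vec n" "corthogonal ws" "length ws = n"
    by (auto simp: len_b)
  from gram_schmidt_hd[OF v, of vs, folded bv] have hdws: "hd ws = v" unfolding ws_def .
  define nw where "nw = (\<lambda>w::real vec. (1 / sqrt (w \<bullet> w)) \<cdot>\<^sub>v w)"
  define W where "W = mat_of_cols n (map nw ws)"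
  have W: "W \<in> carrier_mat n n" unfolding W_def using ws by auto
  have wsi: "ws ! i \<in> carrier_vec n" if "i < n" for i using ws that by auto
  have orth: "(ws ! i \<bullet> ws ! j = 0) = (i \<noteq> j)" if "i < n" "j < n" for i j
    using corthogonalD[OF ws(2), of i j] that ws(3) by simp
  have colW: "col W i = nw (ws ! i)" if "i < n" for i
    unfolding W_def using that ws wsi[OF that] by (subst col_mat_of_cols) (auto simp: nw_def)
  have pos: "ws ! i \<bullet> ws ! i > 0" if "i < n" for i
  proof -
    have "ws ! i \<bullet> ws ! i \<ge> 0" using wsi[OF that]
      by (simp add: scalar_prod_def sum_nonneg)
    moreover have "ws ! i \<bullet> ws ! i \<noteq> 0" using orth[OF that that] by simp
    ultimately show ?thesis by simp
  qed
  have TW: "transpose_mat W * W = 1\<^sub>m n"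
  proof (rule eq_matI)
    fix i j assume ij: "i < dim_row (1\<^sub>m n :: real mat)" "j < dim_col (1\<^sub>m n :: real mat)"
    then have i: "i < n" and j: "j < n" by auto
    have "(transpose_mat W * W) $$ (i,j) = col W i \<bullet> col W j" using i j W by simp
    also have "\<dots> = (1 / sqrt (ws ! i \<bullet> ws ! i)) * (1 / sqrt (ws ! j \<bullet> ws ! j)) * (ws ! i \<bullet> ws ! j)"
      unfolding colW[OF i] colW[OF j] nw_def using wsi[OF i] wsi[OF j]
      by (simp add: smult_scalar_prod_distrib scalar_prod_smult_distrib)
    also have "\<dots> = (1\<^sub>m n :: real mat) $$ (i,j)"
    proof (cases "i = j")
      case True
      have s: "sqrt (ws ! i \<bullet> ws ! i) * sqrt (ws ! i \<bullet> ws ! i) = ws ! i \<bullet> ws ! i"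
        using pos[OF i] by simp
      show ?thesis using True i pos[OF i] s by (simp add: field_simps)
    next
      case False
      then show ?thesis using orth[OF i j] i j by simp
    qed
    finally show "(transpose_mat W * W) $$ (i,j) = (1\<^sub>m n :: real mat) $$ (i,j)" .
  qed (use W in auto)
  have ws0: "ws ! 0 = v" using hdws n ws(3) by (metis hd_conv_nth list.size(3))
  have c0: "col W 0 = (1 / sqrt (v \<bullet> v)) \<cdot>\<^sub>v v"
    using colW[of 0] n ws0 by (simp add: nw_def)
  have c1: "1 / sqrt (v \<bullet> v) \<noteq> 0"
    using pos[of 0] n ws0 by simp
  show ?thesis using W TW c0 c1 by blast
qed





definition diagm :: "nat \<Rightarrow> (nat \<Rightarrow> 'a::zero) \<Rightarrow> 'a mat" where
  "diagm n d = mat n n (\<lambda>(i,j). if i = j then d i else 0)"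

lemma diagm_carrier[simp]: "diagm n d \<in> carrier_mat n n" unfolding diagm_def by auto

lemma char_poly_diagm: "char_poly (diagm n (d :: nat \<Rightarrow> 'a::field)) = (\<Prod>a \<leftarrow> map d [0..<n]. [:- a, 1:])"
proof -
  have "upper_triangular (diagm n d)" unfolding diagm_def by (auto simp: upper_triangular_def)
  moreover have "diag_mat (diagm n d) = map d [0..<n]"
    unfolding diag_mat_def diagm_def by (auto intro: nth_equalityI)
  ultimately show ?thesis using char_poly_upper_triangular[of "diagm n d" n] by simp
qed

lemma diagm_root: "k < n \<Longrightarrow> poly (char_poly (diagm n (d :: nat \<Rightarrow> 'a::field))) (d k) = 0"
  unfolding char_poly_diagm poly_prod_list
  by (auto simp: prod_list_zero_iff)

lemma orth_right: fixes Q :: "'a::field mat"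
  assumes Q: "Q \<in> carrier_mat n n" and QQ: "transpose_mat Q * Q = 1\<^sub>m n"
  shows "Q * transpose_mat Q = 1\<^sub>m n"
  by (rule mat_mult_left_right_inverse[OF _ Q QQ]) (use Q in auto)

lemma char_poly_orth: fixes Q :: "'a::field mat"
  assumes Q: "Q \<in> carrier_mat n n" and D: "D \<in> carrier_mat n n" and QQ: "transpose_mat Q * Q = 1\<^sub>m n"
  shows "char_poly (Q * D * transpose_mat Q) = char_poly D"
proof (rule char_poly_similar)
  show "similar_mat (Q * D * transpose_mat Q) D"
    unfolding similar_mat_def similar_mat_wit_def Let_def
    by (rule exI[of _ Q], rule exI[of _ "transpose_mat Q"]) (use Q D QQ orth_right[OF Q QQ] in auto)
qed




lemma spectral:
  fixes A :: "real mat"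
  assumes "A \<in> carrier_mat n n" and "\<And>i j. i < n \<Longrightarrow> j < n \<Longrightarrow> A $$ (i,j) = A $$ (j,i)"
  shows "\<exists>Q d. Q \<in> carrier_mat n n \<and> transpose_mat Q * Q = 1\<^sub>m n \<and>
     A = Q * diagm n d * transpose_mat Q \<and> (\<forall>i j. i \<le> j \<longrightarrow> j < n \<longrightarrow> d i \<le> d j)"
  using assms
proof (induction n arbitrary: A)
  case 0
  show ?case
    by (rule exI[of _ "1\<^sub>m 0"], rule exI[of _ "\<lambda>_. 0"]) (use 0 in \<open>auto intro!: eq_matI\<close>)
next
  case (Suc m A)
  define n where "n = Suc m"
  have A: "A \<in> carrier_mat n n" using Suc.prems n_def by auto
  have sym: "A $$ (i,j) = A $$ (j,i)" if "i < n" "j < n" for i j using Suc.prems that n_def by auto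
  have AT: "transpose_mat A = A" by (rule eq_matI) (use A sym in auto)
  define R where "R = {r. poly (char_poly A) r = 0}"
  have "char_poly A \<noteq> 0" using degree_monic_char_poly[OF A] by auto
  then have finR: "finite R" unfolding R_def by (rule poly_roots_finite)
  have "R \<noteq> {}" using symm_real_root[OF A sym] unfolding R_def n_def by auto
  define e where "e = Min R"
  have eR: "e \<in> R" and emin: "\<And>r. r \<in> R \<Longrightarrow> e \<le> r" using finR \<open>R \<noteq> {}\<close> unfolding e_def by auto
  have ev: "eigenvalue A e" using eR eigenvalue_root_char_poly[OF A] unfolding R_def by auto
  define v where "v = find_eigenvector A e"
  have v: "v \<in> carrier_vec n" "v \<noteq> 0\<^sub>v n" "A *\<^sub>v v = e \<cdot>\<^sub>v v"
    using find_eigenvector[OF A ev] A unfolding eigenvector_def v_def by auto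
  obtain W c where W: "W \<in> carrier_mat n n" and WW: "transpose_mat W * W = 1\<^sub>m n"
    and c: "col W 0 = c \<cdot>\<^sub>v v"
    using orth_completion[OF v(1,2)] by blast
  have WWt: "W * transpose_mat W = 1\<^sub>m n" using orth_right[OF W WW] .
  have Au: "A *\<^sub>v col W 0 = e \<cdot>\<^sub>v col W 0"
    unfolding c using mult_mat_vec[OF A v(1)] v(3) by (simp add: smult_smult_assoc mult.commute)
  define A' where "A' = transpose_mat W * (A * W)"
  have A'c: "A' \<in> carrier_mat n n" unfolding A'_def using A W by auto
  have A'e: "A' $$ (i,j) = col W i \<bullet> (A *\<^sub>v col W j)" if "i < n" "j < n" for i j
  proof -
    have "A' $$ (i,j) = row (transpose_mat W) i \<bullet> col (A * W) j"
      unfolding A'_def using that A W by (subst index_mult_mat) auto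
    also have "row (transpose_mat W) i = col W i" using that W by simp
    also have "col (A * W) j = A *\<^sub>v col W j" by (rule col_mult2[OF A W that(2)])
    finally show ?thesis .
  qed
  have WWe: "col W i \<bullet> col W j = (if i = j then 1 else 0)" if "i < n" "j < n" for i j
  proof -
    have "(transpose_mat W * W) $$ (i,j) = col W i \<bullet> col W j" using that W by simp
    then show ?thesis using WW that by simp
  qed
  have A'sym: "A' $$ (i,j) = A' $$ (j,i)" if "i < n" "j < n" for i j
  proof -
    have "col W j \<bullet> (A *\<^sub>v col W i) = (transpose_mat A *\<^sub>v col W j) \<bullet> col W i"
      by (rule transpose_vec_mult_scalar[symmetric]) (use A W that in auto)
    also have "\<dots> = col W i \<bullet> (A *\<^sub>v col W j)" unfolding AT
      by (rule comm_scalar_prod[where n = n]) (use A W that in auto)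
    finally show ?thesis using A'e that by simp
  qed
  have A'0: "A' $$ (i,0) = (if i = 0 then e else 0)" if "i < n" for i
  proof -
    have "A' $$ (i,0) = col W i \<bullet> (e \<cdot>\<^sub>v col W 0)" using A'e[OF that] Au n_def by simp
    also have "\<dots> = e * (col W i \<bullet> col W 0)"
      by (rule scalar_prod_smult_distrib[OF col_dim col_dim])
    finally show ?thesis using WWe[of i 0] that n_def by auto
  qed
  define A3 where "A3 = mat m m (\<lambda>(i,j). A' $$ (Suc i, Suc j))"
  have A3c: "A3 \<in> carrier_mat m m" unfolding A3_def by auto
  have A3sym: "A3 $$ (i,j) = A3 $$ (j,i)" if "i < m" "j < m" for i j
    unfolding A3_def using that A'sym[of "Suc i" "Suc j"] n_def by auto
  define E1 where "E1 = mat 1 1 (\<lambda>_. e)"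
  have A'blk: "A' = four_block_mat E1 (0\<^sub>m 1 m) (0\<^sub>m m 1) A3"
  proof (rule eq_matI)
    fix i j assume "i < dim_row (four_block_mat E1 (0\<^sub>m 1 m) (0\<^sub>m m 1) A3)"
      "j < dim_col (four_block_mat E1 (0\<^sub>m 1 m) (0\<^sub>m m 1) A3)"
    then have i: "i < n" and j: "j < n" using n_def A3c by (auto simp: E1_def)
    show "A' $$ (i,j) = four_block_mat E1 (0\<^sub>m 1 m) (0\<^sub>m m 1) A3 $$ (i,j)"
    proof (cases "i = 0")
      case True
      then show ?thesis using A'sym[OF i j] A'0[OF j] j n_def A3c by (auto simp: E1_def four_block_mat_def)
    next
      case False
      then show ?thesis using A'0[OF i] i j n_def A3c by (cases j) (auto simp: E1_def A3_def four_block_mat_def)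
    qed
  qed (use A'c A3c n_def in \<open>auto simp: E1_def\<close>)
  obtain Q3 d3 where Q3: "Q3 \<in> carrier_mat m m" and QQ3: "transpose_mat Q3 * Q3 = 1\<^sub>m m"
    and A3eq: "A3 = Q3 * diagm m d3 * transpose_mat Q3" and d3s: "\<forall>i j. i \<le> j \<longrightarrow> j < m \<longrightarrow> d3 i \<le> d3 j"
    using Suc.IH[OF A3c A3sym] by blast
  define B where "B = four_block_mat (1\<^sub>m 1) (0\<^sub>m 1 m) (0\<^sub>m m 1) Q3"
  define d where "d = (\<lambda>i. if i = 0 then e else d3 (i - 1))"
  have Bc: "B \<in> carrier_mat n n" unfolding B_def n_def using Q3 by auto
  have BT: "transpose_mat B = four_block_mat (1\<^sub>m 1) (0\<^sub>m 1 m) (0\<^sub>m m 1) (transpose_mat Q3)"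
    unfolding B_def by (subst transpose_four_block_mat) (use Q3 in auto)
  have one: "four_block_mat (1\<^sub>m 1) (0\<^sub>m 1 m) (0\<^sub>m m 1) (1\<^sub>m m) = (1\<^sub>m n :: real mat)"
    unfolding n_def by (rule eq_matI) auto
  have BB: "transpose_mat B * B = 1\<^sub>m n"
    unfolding BT unfolding B_def
    by (subst mult_four_block_mat[of _ 1 1 _ m _ m _ _ 1 _ m]) (use Q3 QQ3 one in auto)
  have Dblk: "diagm n d = four_block_mat E1 (0\<^sub>m 1 m) (0\<^sub>m m 1) (diagm m d3)"
    unfolding n_def by (rule eq_matI) (auto simp: diagm_def E1_def d_def)
  have E1c: "E1 \<in> carrier_mat 1 1" unfolding E1_def by auto
  have s1: "four_block_mat (1\<^sub>m 1) (0\<^sub>m 1 m) (0\<^sub>m m 1) Q3 * four_block_mat E1 (0\<^sub>m 1 m) (0\<^sub>m m 1) (diagm m d3)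
      = four_block_mat E1 (0\<^sub>m 1 m) (0\<^sub>m m 1) (Q3 * diagm m d3)"
    by (subst mult_four_block_mat[of _ 1 1 _ m _ m _ _ 1 _ m]) (use Q3 E1c in \<open>auto simp: left_mult_zero_mat[OF diagm_carrier]\<close>)
  have QD: "Q3 * diagm m d3 \<in> carrier_mat m m" using Q3 by simp
  have s2: "four_block_mat E1 (0\<^sub>m 1 m) (0\<^sub>m m 1) (Q3 * diagm m d3) * four_block_mat (1\<^sub>m 1) (0\<^sub>m 1 m) (0\<^sub>m m 1) (transpose_mat Q3)
      = four_block_mat E1 (0\<^sub>m 1 m) (0\<^sub>m m 1) (Q3 * diagm m d3 * transpose_mat Q3)"
    by (subst mult_four_block_mat[of _ 1 1 _ m _ m _ _ 1 _ m]) (use Q3 E1c in \<open>auto simp: right_mult_zero_mat[OF QD] left_add_zero_mat[OF mult_carrier_mat[OF QD transpose_carrier_mat[THEN iffD2, OF Q3]]]\<close>)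
  have BDB: "B * diagm n d * transpose_mat B = A'"
    unfolding Dblk BT unfolding B_def A'blk A3eq s1 s2 ..
  define Q where "Q = W * B"
  have Qc: "Q \<in> carrier_mat n n" unfolding Q_def using W Bc by auto
  have QT: "transpose_mat Q = transpose_mat B * transpose_mat W"
    unfolding Q_def by (rule transpose_mult) (use W Bc in auto)
  have QQ: "transpose_mat Q * Q = 1\<^sub>m n"
  proof -
    have "transpose_mat Q * Q = transpose_mat B * (transpose_mat W * W) * B"
      unfolding QT unfolding Q_def using W Bc by (simp add: assoc_mult_mat[of _ n n _ n _ n])
    also have "\<dots> = 1\<^sub>m n" using WW BB Bc by simp
    finally show ?thesis .
  qed
  have AQ: "A = Q * diagm n d * transpose_mat Q"
  proof -
    have "Q * diagm n d * transpose_mat Q = W * (B * diagm n d * transpose_mat B) * transpose_mat W"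
    proof -
      have D: "diagm n d \<in> carrier_mat n n" by simp
      have BT': "transpose_mat B \<in> carrier_mat n n" "transpose_mat W \<in> carrier_mat n n" using Bc W by auto
      have X1: "diagm n d * transpose_mat B \<in> carrier_mat n n" using mult_carrier_mat[OF D BT'(1)] .
      have X2: "transpose_mat B * transpose_mat W \<in> carrier_mat n n" using mult_carrier_mat[OF BT'(1) BT'(2)] .
      have X3: "diagm n d * (transpose_mat B * transpose_mat W) \<in> carrier_mat n n" using mult_carrier_mat[OF D X2] .
      have X4: "B * (diagm n d * transpose_mat B) \<in> carrier_mat n n" using mult_carrier_mat[OF Bc X1] .
      note X = X1 X2 X3 X4
      show ?thesis unfolding QT unfolding Q_def using W Bc D BT' X
        by (simp add: assoc_mult_mat[of _ n n _ n _ n])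
    qed
    also have "\<dots> = W * A' * transpose_mat W" unfolding BDB ..
    also have "\<dots> = (W * transpose_mat W) * A * (W * transpose_mat W)"
    proof -
      have BT': "transpose_mat W \<in> carrier_mat n n" using W by auto
      have X: "A * W \<in> carrier_mat n n" "A * transpose_mat W \<in> carrier_mat n n" "W * transpose_mat W \<in> carrier_mat n n" using A W by auto
      show ?thesis unfolding A'_def using W A BT' X
        by (simp add: assoc_mult_mat[of _ n n _ n _ n])
    qed
    also have "\<dots> = A" using WWt A by simp
    finally show ?thesis by simp
  qed
  have d3R: "d3 k \<in> R" if "k < m" for k
  proof -
    have "char_poly A' = char_poly A"
      unfolding A'_def by (rule char_poly_similar)
        (unfold similar_mat_def similar_mat_wit_def Let_def,
         rule exI[of _ "transpose_mat W"], rule exI[of _ W], use W A WW WWt in auto)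
    moreover have "char_poly A' = char_poly E1 * char_poly A3"
      unfolding A'blk by (rule char_poly_four_block_zeros_col) (auto simp: E1_def A3c)
    moreover have "char_poly A3 = char_poly (diagm m d3)"
      unfolding A3eq by (rule char_poly_orth[OF Q3 _ QQ3]) simp
    ultimately have "char_poly A = char_poly E1 * char_poly (diagm m d3)" by simp
    then show ?thesis unfolding R_def using diagm_root[OF that, of d3] by simp
  qed
  have sorted: "\<forall>i j. i \<le> j \<longrightarrow> j < n \<longrightarrow> d i \<le> d j"
  proof (intro allI impI)
    fix i j assume ij: "i \<le> j" "j < n"
    show "d i \<le> d j"
    proof (cases "i = 0")
      case True
      then show ?thesis using emin d3R[of "j - 1"] ij n_def by (cases j) (auto simp: d_def)
    next
      case False
      then show ?thesis using d3s ij n_def by (auto simp: d_def)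
    qed
  qed
  show ?case using Qc QQ AQ sorted unfolding n_def by blast
qed




lemma proots_linprod: "proots (\<Prod>a \<leftarrow> xs. [:- a, 1:]) = mset (xs :: 'a::idom list)"
proof (induction xs)
  case Nil
  then show ?case by simp
next
  case (Cons a xs)
  have nz: "(\<Prod>b \<leftarrow> xs. [:- b, 1:]) \<noteq> (0 :: 'a poly)" by (auto simp: prod_list_zero_iff)
  have eq: "(\<Prod>b \<leftarrow> a # xs. [:- b, 1:]) = [:- a, 1:] * (\<Prod>b \<leftarrow> xs. [:- b, 1:])" by simp
  have pm: "proots ([:- a, 1:] * (\<Prod>b \<leftarrow> xs. [:- b, 1:])) = proots [:- a, 1:] + proots (\<Prod>b \<leftarrow> xs. [:- b, 1:])"
    by (rule proots_mult) (use nz in auto)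
  have e1: "proots [:- a, 1:] = {#a#}" using proots_linear_factor[of "- a"] by simp
  show ?case unfolding eq pm e1 Cons.IH by simp
qed

lemma diagm_mult_vec: "b \<in> carrier_vec n \<Longrightarrow> diagm n d *\<^sub>v b = vec n (\<lambda>j. d j * b $ j)"
proof (rule eq_vecI)
  fix j assume b: "b \<in> carrier_vec n" and "j < dim_vec (vec n (\<lambda>j. d j * b $ j))"
  then have j: "j < n" by simp
  have "(diagm n d *\<^sub>v b) $ j = (\<Sum>i = 0..<n. (if j = i then d j else 0) * b $ i)"
    using j b unfolding diagm_def by (auto simp: scalar_prod_def row_def intro!: sum.cong)
  also have "\<dots> = (\<Sum>i\<in>{0..<n}. (if j = i then d j * b $ i else 0))"
    by (rule sum.cong) auto
  also have "\<dots> = d j * b $ j" using j by simp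
  finally show "(diagm n d *\<^sub>v b) $ j = vec n (\<lambda>j. d j * b $ j) $ j" using j by simp
qed (auto simp: diagm_def)

lemma eig_sorted_spectral:
  fixes Q :: "real mat"
  assumes Q: "Q \<in> carrier_mat n n" and QQ: "transpose_mat Q * Q = 1\<^sub>m n"
    and A: "A = Q * diagm n d * transpose_mat Q" and s: "\<forall>i j. i \<le> j \<longrightarrow> j < n \<longrightarrow> d i \<le> d j"
  shows "eigenvalues_sorted A = map d [0..<n]"
proof -
  have "char_poly A = (\<Prod>a \<leftarrow> map d [0..<n]. [:- a, 1:])"
    unfolding A char_poly_orth[OF Q diagm_carrier QQ] char_poly_diagm ..
  then have pr: "proots (char_poly A) = mset (map d [0..<n])"
    by (simp only: proots_linprod)
  have "sorted (map d [0..<n])" using s by (auto simp: sorted_iff_nth_mono)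
  then show ?thesis unfolding eigenvalues_sorted_def pr sorted_list_of_multiset_mset by (rule sorted_sort_id)
qed

lemma quad_orth:
  fixes Q :: "real mat"
  assumes Q: "Q \<in> carrier_mat n n" and QQ: "transpose_mat Q * Q = 1\<^sub>m n" and b: "b \<in> carrier_vec n"
  shows "(Q *\<^sub>v b) \<bullet> ((Q * diagm n d * transpose_mat Q) *\<^sub>v (Q *\<^sub>v b)) = (\<Sum>j<n. d j * (b $ j)^2)"
    and "(Q *\<^sub>v b) \<bullet> (Q *\<^sub>v b) = (\<Sum>j<n. (b $ j)^2)"
proof -
  have QTQb: "transpose_mat Q *\<^sub>v (Q *\<^sub>v b) = b"
  proof -
    have "transpose_mat Q *\<^sub>v (Q *\<^sub>v b) = (transpose_mat Q * Q) *\<^sub>v b"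
      using Q b by (simp add: assoc_mult_mat_vec[of _ n n _ n])
    also have "\<dots> = b" using QQ b by simp
    finally show ?thesis .
  qed
  have Db: "diagm n d *\<^sub>v b \<in> carrier_vec n" using mult_mat_vec_carrier[OF diagm_carrier b] .
  have "(Q * diagm n d * transpose_mat Q) *\<^sub>v (Q *\<^sub>v b) = Q *\<^sub>v (diagm n d *\<^sub>v b)"
    using Q b QTQb by (simp add: assoc_mult_mat_vec[of _ n n _ n])
  then have "(Q *\<^sub>v b) \<bullet> ((Q * diagm n d * transpose_mat Q) *\<^sub>v (Q *\<^sub>v b))
      = (transpose_mat Q *\<^sub>v (Q *\<^sub>v b)) \<bullet> (diagm n d *\<^sub>v b)"
    using transpose_vec_mult_scalar[OF Q Db, of "Q *\<^sub>v b"] Q b by simp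
  also have "\<dots> = b \<bullet> (diagm n d *\<^sub>v b)" unfolding QTQb ..
  also have "\<dots> = (\<Sum>j<n. d j * (b $ j)^2)"
    using b by (auto simp: diagm_mult_vec scalar_prod_def power2_eq_square atLeast0LessThan
        intro!: sum.cong)
  finally show "(Q *\<^sub>v b) \<bullet> ((Q * diagm n d * transpose_mat Q) *\<^sub>v (Q *\<^sub>v b)) = (\<Sum>j<n. d j * (b $ j)^2)" .
  have "(Q *\<^sub>v b) \<bullet> (Q *\<^sub>v b) = (transpose_mat Q *\<^sub>v (Q *\<^sub>v b)) \<bullet> b"
    using transpose_vec_mult_scalar[OF Q b, of "Q *\<^sub>v b"] Q b by simp
  also have "\<dots> = (\<Sum>j<n. (b $ j)^2)" unfolding QTQb
    using b by (auto simp: scalar_prod_def power2_eq_square atLeast0LessThan)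
  finally show "(Q *\<^sub>v b) \<bullet> (Q *\<^sub>v b) = (\<Sum>j<n. (b $ j)^2)" .
qed





lemma kernel_exists:
  fixes A :: "'a::idom mat"
  assumes A: "A \<in> carrier_mat m k" and mk: "m < k"
  shows "\<exists>v\<in>carrier_vec k. v \<noteq> 0\<^sub>v k \<and> A *\<^sub>v v = 0\<^sub>v m"
proof -
  define B where "B = mat k k (\<lambda>(i,j). if i < m then A $$ (i,j) else 0)"
  have B: "B \<in> carrier_mat k k" unfolding B_def by auto
  have "det B = 0"
  proof -
    have "B = mat\<^sub>r k k (\<lambda>i. if i = k - 1 then 0\<^sub>v k else row B i)"
      by (rule eq_matI) (use mk in \<open>auto simp: B_def\<close>)
    also have "det \<dots> = 0" by (rule det_row_0) (use mk B in auto)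
    finally show ?thesis .
  qed
  then obtain v where v: "v \<in> carrier_vec k" "v \<noteq> 0\<^sub>v k" "B *\<^sub>v v = 0\<^sub>v k"
    using det_0_iff_vec_prod_zero[OF B] by auto
  have "A *\<^sub>v v = 0\<^sub>v m"
  proof (rule eq_vecI)
    fix i assume i: "i < dim_vec (0\<^sub>v m :: 'a vec)"
    have "(B *\<^sub>v v) $ i = 0" using v(3) i mk by simp
    moreover have "(B *\<^sub>v v) $ i = (A *\<^sub>v v) $ i"
      using i mk A v(1) by (auto simp: B_def scalar_prod_def row_def)
    ultimately show "(A *\<^sub>v v) $ i = 0\<^sub>v m $ i" using i by simp
  qed (use A in simp)
  with v show ?thesis by auto
qed



lemma det_agree:
  fixes A B :: "'a::comm_ring_1 mat"
  assumes A: "A \<in> carrier_mat n n" and B: "B \<in> carrier_mat n n"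
  and zA: "\<And>i j. i < n \<Longrightarrow> j < n \<Longrightarrow> i \<in> Z \<Longrightarrow> j \<noteq> i \<Longrightarrow> A $$ (i,j) = 0"
  and zB: "\<And>i j. i < n \<Longrightarrow> j < n \<Longrightarrow> i \<in> Z \<Longrightarrow> j \<noteq> i \<Longrightarrow> B $$ (i,j) = 0"
  and eq: "\<And>i j. i < n \<Longrightarrow> j < n \<Longrightarrow> i \<in> Z \<or> j \<notin> Z \<Longrightarrow> A $$ (i,j) = B $$ (i,j)"
  shows "det A = det B"
proof -
  have "(\<Prod>i = 0..<n. A $$ (i, p i)) = (\<Prod>i = 0..<n. B $$ (i, p i))"
    if p: "p permutes {0..<n}" for p
  proof (cases "\<exists>i<n. i \<in> Z \<and> p i \<noteq> i")
    case True
    then obtain i where i: "i < n" "i \<in> Z" "p i \<noteq> i" by auto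
    have pi: "p i < n" using p i(1) by (meson atLeastLessThan_iff permutes_in_image zero_le)
    have "A $$ (i, p i) = 0" "B $$ (i, p i) = 0" using zA zB i pi by auto
    then have "(\<Prod>i = 0..<n. A $$ (i, p i)) = 0" "(\<Prod>i = 0..<n. B $$ (i, p i)) = 0"
      using i(1) by (auto intro!: prod_zero)
    then show ?thesis by simp
  next
    case False
    show ?thesis
    proof (rule prod.cong[OF refl])
      fix i assume i: "i \<in> {0..<n}"
      have pi: "p i < n" using permutes_in_image[OF p] i by auto
      have "i \<in> Z \<or> p i \<notin> Z"
      proof (rule ccontr)
        assume "\<not> (i \<in> Z \<or> p i \<notin> Z)"
        then have "i \<notin> Z" "p i \<in> Z" by auto
        with False pi have "p (p i) = p i" by auto
        then have "p i = i" using permutes_inj[OF p] by (meson injD)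
        with \<open>i \<notin> Z\<close> \<open>p i \<in> Z\<close> show False by simp
      qed
      then show "A $$ (i, p i) = B $$ (i, p i)" using eq i pi by auto
    qed
  qed
  then show ?thesis unfolding det_def'[OF A] det_def'[OF B] by (intro sum.cong) auto
qed


lemma core:
  fixes Q R :: "real mat" and a b :: "nat \<Rightarrow> real"
  assumes Q: "Q \<in> carrier_mat N N" and R: "R \<in> carrier_mat N N"
    and QQ: "transpose_mat Q * Q = 1\<^sub>m N" and RR: "transpose_mat R * R = 1\<^sub>m N"
    and as: "\<forall>i j. i \<le> j \<longrightarrow> j < N \<longrightarrow> a i \<le> a j"
    and bs: "\<forall>i j. i \<le> j \<longrightarrow> j < N \<longrightarrow> b i \<le> b j"
    and k: "k < N"
    and cond: "\<And>\<beta>. \<beta> \<in> carrier_vec N \<Longrightarrow> (\<forall>j<k. \<beta> $ j = 0) \<Longrightarrow>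
       (Q *\<^sub>v \<beta>) \<bullet> ((Q * diagm N a * transpose_mat Q) *\<^sub>v (Q *\<^sub>v \<beta>))
         \<le> (Q *\<^sub>v \<beta>) \<bullet> ((R * diagm N b * transpose_mat R) *\<^sub>v (Q *\<^sub>v \<beta>))"
  shows "a k \<le> b k"
proof (rule ccontr)
  assume "\<not> a k \<le> b k"
  then have lt: "b k < a k" by simp
  define M where "M = mat N (Suc N) (\<lambda>(i,c). if c \<le> k then R $$ (i,c) else Q $$ (i, c - 1))"
  have Mc: "M \<in> carrier_mat N (Suc N)" unfolding M_def by auto
  obtain y where y: "y \<in> carrier_vec (Suc N)" "y \<noteq> 0\<^sub>v (Suc N)" "M *\<^sub>v y = 0\<^sub>v N"
    using kernel_exists[OF Mc] by auto
  define \<alpha> where "\<alpha> = vec N (\<lambda>i. if i \<le> k then y $ i else 0)"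
  define \<beta> where "\<beta> = vec N (\<lambda>j. if k \<le> j then - y $ (Suc j) else 0)"
  have \<alpha>c: "\<alpha> \<in> carrier_vec N" and \<beta>c: "\<beta> \<in> carrier_vec N" unfolding \<alpha>_def \<beta>_def by auto
  have RQ: "R *\<^sub>v \<alpha> = Q *\<^sub>v \<beta>"
  proof (rule eq_vecI)
    fix i assume "i < dim_vec (Q *\<^sub>v \<beta>)"
    then have i: "i < N" using Q by simp
    have "0 = (M *\<^sub>v y) $ i" using y(3) i by simp
    also have "\<dots> = (\<Sum>c<Suc N. M $$ (i,c) * y $ c)"
      using i Mc y(1) by (simp add: scalar_prod_def row_def atLeast0LessThan)
    also have "\<dots> = (\<Sum>c<Suc N. (if c \<le> k then R $$ (i,c) * y $ c else 0))
        + (\<Sum>c<Suc N. (if c \<le> k then 0 else Q $$ (i, c - 1) * y $ c))"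
      unfolding sum.distrib[symmetric] using i by (intro sum.cong) (auto simp: M_def)
    also have "(\<Sum>c<Suc N. (if c \<le> k then R $$ (i,c) * y $ c else 0)) = (R *\<^sub>v \<alpha>) $ i"
    proof -
      have "(\<Sum>c<Suc N. (if c \<le> k then R $$ (i,c) * y $ c else 0))
          = (\<Sum>c<N. (if c \<le> k then R $$ (i,c) * y $ c else 0))"
        using k by (simp add: lessThan_Suc)
      also have "\<dots> = (R *\<^sub>v \<alpha>) $ i"
        using i R by (auto simp: scalar_prod_def row_def \<alpha>_def atLeast0LessThan intro!: sum.cong)
      finally show ?thesis .
    qed
    also have "(\<Sum>c<Suc N. (if c \<le> k then 0 else Q $$ (i, c - 1) * y $ c)) = - (Q *\<^sub>v \<beta>) $ i"
    proof -
      have "(\<Sum>c<Suc N. (if c \<le> k then 0 else Q $$ (i, c - 1) * y $ c))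
          = (\<Sum>j<N. (if Suc j \<le> k then 0 else Q $$ (i, j) * y $ Suc j))"
        by (subst sum.lessThan_Suc_shift) (auto intro!: sum.cong)
      also have "\<dots> = - (Q *\<^sub>v \<beta>) $ i"
        using i Q by (auto simp: scalar_prod_def row_def \<beta>_def atLeast0LessThan sum_negf[symmetric]
            intro!: sum.cong)
      finally show ?thesis .
    qed
    finally show "(R *\<^sub>v \<alpha>) $ i = (Q *\<^sub>v \<beta>) $ i" by simp
  qed (use Q R in simp)
  define x where "x = Q *\<^sub>v \<beta>"
  have \<beta>0: "\<forall>j<k. \<beta> $ j = 0" using k unfolding \<beta>_def by auto
  have c1: "x \<bullet> ((Q * diagm N a * transpose_mat Q) *\<^sub>v x) = (\<Sum>j<N. a j * (\<beta> $ j)^2)"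
    unfolding x_def by (rule quad_orth(1)[OF Q QQ \<beta>c])
  have c2: "x \<bullet> ((R * diagm N b * transpose_mat R) *\<^sub>v x) = (\<Sum>j<N. b j * (\<alpha> $ j)^2)"
    unfolding x_def RQ[symmetric] by (rule quad_orth(1)[OF R RR \<alpha>c])
  have n1: "x \<bullet> x = (\<Sum>j<N. (\<beta> $ j)^2)" unfolding x_def by (rule quad_orth(2)[OF Q QQ \<beta>c])
  have n2: "x \<bullet> x = (\<Sum>j<N. (\<alpha> $ j)^2)" unfolding x_def RQ[symmetric] by (rule quad_orth(2)[OF R RR \<alpha>c])
  have ge: "(\<Sum>j<N. a j * (\<beta> $ j)^2) \<ge> (\<Sum>j<N. a k * (\<beta> $ j)^2)"
  proof (rule sum_mono)
    fix j assume j: "j \<in> {..<N}"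
    show "a k * (\<beta> $ j)^2 \<le> a j * (\<beta> $ j)^2"
    proof (cases "k \<le> j")
      case True
      then show ?thesis using as j by (auto intro!: mult_right_mono)
    next
      case False
      then show ?thesis using \<beta>0 by simp
    qed
  qed
  have le: "(\<Sum>j<N. b j * (\<alpha> $ j)^2) \<le> (\<Sum>j<N. b k * (\<alpha> $ j)^2)"
  proof (rule sum_mono)
    fix j assume j: "j \<in> {..<N}"
    show "b j * (\<alpha> $ j)^2 \<le> b k * (\<alpha> $ j)^2"
    proof (cases "j \<le> k")
      case True
      then show ?thesis using bs j k by (auto intro!: mult_right_mono)
    next
      case False
      then show ?thesis using j by (simp add: \<alpha>_def)
    qed
  qed
  have main: "a k * (x \<bullet> x) \<le> b k * (x \<bullet> x)"
  proof -
    have "a k * (x \<bullet> x) = (\<Sum>j<N. a k * (\<beta> $ j)^2)" unfolding n1 by (simp add: sum_distrib_left)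
    also have "\<dots> \<le> x \<bullet> ((Q * diagm N a * transpose_mat Q) *\<^sub>v x)" using ge c1 by simp
    also have "\<dots> \<le> x \<bullet> ((R * diagm N b * transpose_mat R) *\<^sub>v x)"
      unfolding x_def by (rule cond[OF \<beta>c \<beta>0])
    also have "\<dots> \<le> (\<Sum>j<N. b k * (\<alpha> $ j)^2)" using le c2 by simp
    also have "\<dots> = b k * (x \<bullet> x)" unfolding n2 by (simp add: sum_distrib_left)
    finally show ?thesis .
  qed
  have "x \<bullet> x = 0"
  proof (rule ccontr)
    assume "x \<bullet> x \<noteq> 0"
    moreover have "x \<bullet> x \<ge> 0" unfolding n1 by (simp add: sum_nonneg)
    ultimately have "x \<bullet> x > 0" by simp
    with main lt show False by simp
  qed
  then have a0: "\<And>j. j < N \<Longrightarrow> \<alpha> $ j = 0" and b0: "\<And>j. j < N \<Longrightarrow> \<beta> $ j = 0"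
    using n1 n2 by (simp_all add: sum_nonneg_eq_0_iff)
  have "y = 0\<^sub>v (Suc N)"
  proof (rule eq_vecI)
    fix c assume "c < dim_vec (0\<^sub>v (Suc N) :: real vec)"
    then have c: "c < Suc N" by simp
    show "y $ c = 0\<^sub>v (Suc N) $ c"
    proof (cases "c \<le> k")
      case True
      then show ?thesis using a0[of c] k c by (simp add: \<alpha>_def)
    next
      case False
      then obtain j where j: "c = Suc j" "k \<le> j" by (cases c) auto
      then show ?thesis using b0[of j] c by (simp add: \<beta>_def)
    qed
  qed (use y(1) in simp)
  with y(2) show False by simp
qed




lemma quad_gram:
  fixes c :: "nat \<Rightarrow> 'b \<Rightarrow> real"
  assumes E: "finite E" and x: "x \<in> carrier_vec N"
  shows "x \<bullet> (mat N N (\<lambda>(i,j). \<Sum>F\<in>E. \<omega> F * c i F * c j F) *\<^sub>v x)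
       = (\<Sum>F\<in>E. \<omega> F * (\<Sum>i<N. c i F * x $ i)^2)"
proof -
  have "x \<bullet> (mat N N (\<lambda>(i,j). \<Sum>F\<in>E. \<omega> F * c i F * c j F) *\<^sub>v x)
      = (\<Sum>i<N. x $ i * (\<Sum>j<N. (\<Sum>F\<in>E. \<omega> F * c i F * c j F) * x $ j))"
    using x by (auto simp: scalar_prod_def row_def atLeast0LessThan intro!: sum.cong)
  also have "\<dots> = (\<Sum>i<N. \<Sum>j<N. \<Sum>F\<in>E. \<omega> F * (c i F * x $ i) * (c j F * x $ j))"
    by (simp add: sum_distrib_left sum_distrib_right mult_ac)
  also have "\<dots> = (\<Sum>F\<in>E. \<Sum>i<N. \<Sum>j<N. \<omega> F * (c i F * x $ i) * (c j F * x $ j))"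
    by (simp add: sum.swap[of _ E])
  also have "\<dots> = (\<Sum>F\<in>E. \<omega> F * (\<Sum>i<N. c i F * x $ i)^2)"
    by (simp add: power2_eq_square sum_product sum_distrib_left mult_ac)
  finally show ?thesis .
qed

lemma cob_ind:
  fixes F Fb :: "'v::linorder set"
  assumes F: "card F = n + 1" and Fb: "card Fb = n + 2"
  shows "coboundary (\<lambda>G. if G = F then 1 else 0) Fb = (if F \<subset> Fb then bsign F Fb else 0)"
proof -
  have finFb: "finite Fb" using Fb card.infinite by fastforce
  show ?thesis
  proof (cases "F \<subset> Fb")
    case True
    have finF: "finite F" using F card.infinite by fastforce
    have "card (Fb - F) = 1" using True F Fb finF by (simp add: card_Diff_subset)
    then obtain u where u: "Fb - F = {u}" by (auto simp: card_Suc_eq)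
    have uFb: "u \<in> Fb" using u by auto
    have iff: "(Fb - {v} = F) = (v = u)" if v: "v \<in> Fb" for v
      using u True v by blast
    have "coboundary (\<lambda>G. if G = F then 1 else 0) Fb = (\<Sum>v\<in>Fb. if v = u then (-1) ^ vpos Fb v else 0)"
      unfolding coboundary_def by (rule sum.cong) (auto simp: iff)
    also have "\<dots> = (-1) ^ vpos Fb u" using finFb uFb by simp
    also have "\<dots> = bsign F Fb" unfolding bsign_def u by simp
    finally show ?thesis using True by simp
  next
    case False
    have "Fb - {v} \<noteq> F" if "v \<in> Fb" for v using False that by blast
    then show ?thesis using False unfolding coboundary_def by (auto intro!: sum.neutral)
  qed
qed

lemma lap_entry:
  fixes C :: "'v::linorder set set"
  assumes fin: "finite (faces (n+1) C)" and F: "card F = n + 1" and G: "card G = n + 1"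
    and w: "w F = 0 \<or> w F = 1"
  shows "up_laplacian C w n (\<lambda>H. if H = G then 1 else 0) F
    = w F * (\<Sum>Fb\<in>faces (n+1) C. w Fb * coboundary (\<lambda>H. if H = F then 1 else 0) Fb
                                       * coboundary (\<lambda>H. if H = G then 1 else 0) Fb)"
proof (cases "w F = 0")
  case True
  then show ?thesis unfolding up_laplacian_def coboundary_adj_def by simp
next
  case False
  then have w1: "w F = 1" using w by simp
  have cF: "coboundary (\<lambda>H. if H = F then 1 else 0) Fb = (if F \<subset> Fb then bsign F Fb else 0)"
    if "Fb \<in> faces (n+1) C" for Fb
    by (rule cob_ind[OF F]) (use that in \<open>simp add: faces_def\<close>)
  have "up_laplacian C w n (\<lambda>H. if H = G then 1 else 0) F
      = (\<Sum>Fb\<in>{Fb \<in> faces (n + 1) C. F \<subset> Fb}. w Fb * bsign F Fb * coboundary (\<lambda>H. if H = G then 1 else 0) Fb)"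
    unfolding up_laplacian_def coboundary_adj_def using w1 by simp
  also have "\<dots> = (\<Sum>Fb\<in>faces (n + 1) C. if F \<subset> Fb then w Fb * bsign F Fb * coboundary (\<lambda>H. if H = G then 1 else 0) Fb else 0)"
    by (rule sum.inter_filter[OF fin])
  also have "\<dots> = (\<Sum>Fb\<in>faces (n+1) C. w Fb * coboundary (\<lambda>H. if H = F then 1 else 0) Fb
                                       * coboundary (\<lambda>H. if H = G then 1 else 0) Fb)"
    by (rule sum.cong) (auto simp: cF)
  finally show ?thesis using w1 by simp
qed




lemma char_poly_agree:
  fixes A B :: "real mat"
  assumes A: "A \<in> carrier_mat N N" and B: "B \<in> carrier_mat N N"
    and zA: "\<And>i j. i < N \<Longrightarrow> j < N \<Longrightarrow> i \<in> Z \<Longrightarrow> A $$ (i,j) = 0"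
    and zB: "\<And>i j. i < N \<Longrightarrow> j < N \<Longrightarrow> i \<in> Z \<Longrightarrow> B $$ (i,j) = 0"
    and eq: "\<And>i j. i < N \<Longrightarrow> j < N \<Longrightarrow> i \<in> Z \<or> j \<notin> Z \<Longrightarrow> A $$ (i,j) = B $$ (i,j)"
  shows "char_poly A = char_poly B"
  unfolding char_poly_def
proof (rule det_agree[of _ N _ Z])
  show "char_poly_matrix A \<in> carrier_mat N N" "char_poly_matrix B \<in> carrier_mat N N" using A B by auto
  show "char_poly_matrix A $$ (i, j) = 0" if "i < N" "j < N" "i \<in> Z" "j \<noteq> i" for i j
    using that A zA[of i j] unfolding char_poly_matrix_def by simp
  show "char_poly_matrix B $$ (i, j) = 0" if "i < N" "j < N" "i \<in> Z" "j \<noteq> i" for i j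
    using that B zB[of i j] unfolding char_poly_matrix_def by simp
  show "char_poly_matrix A $$ (i, j) = char_poly_matrix B $$ (i, j)" if "i < N" "j < N" "i \<in> Z \<or> j \<notin> Z" for i j
    using that A B eq[of i j] unfolding char_poly_matrix_def by simp
qed

theorem corollary2p16:
  fixes K L :: "'v::linorder set set" and wL :: "'v set \<Rightarrow> real" and n :: nat
  assumes "simplicial_complex K"
    and "subcomplex L K"
    and "faces n L = faces n K"
    and "\<forall>F\<in>L. wL F \<in> {0, 1}"
  shows "\<forall>k < card (faces n K).
           eigenvalues_sorted (up_laplacian_mat L wL n) ! k
             \<le> eigenvalues_sorted (up_laplacian_mat K (\<lambda>_. 1) n) ! k"
proof -
  have finK: "finite K" using assms(1) unfolding simplicial_complex_def by auto
  have LK: "L \<subseteq> K" using assms(2) unfolding subcomplex_def by auto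
  have finfK: "finite (faces j K)" for j using finK unfolding faces_def by auto
  have finfL: "finite (faces j L)" for j using finK LK unfolding faces_def by (auto intro: finite_subset)
  define xs where "xs = face_enum n K"
  have "\<exists>ys. distinct ys \<and> set ys = faces n K" using finite_distinct_list[OF finfK] by metis
  then have xs: "distinct xs" "set xs = faces n K"
    unfolding xs_def face_enum_def by (metis (mono_tags, lifting) someI_ex)+
  have xsL: "face_enum n L = xs" unfolding xs_def face_enum_def assms(3) ..
  define N where "N = length xs"
  have cardN: "card (faces n K) = N" unfolding N_def using xs distinct_card by metis
  have xsi: "xs ! i \<in> faces n K" if "i < N" for i using xs that N_def nth_mem by metis
  have cxs: "card (xs ! i) = n + 1" if "i < N" for i using xsi[OF that] by (simp add: faces_def)
  have xsiL: "xs ! i \<in> L" if "i < N" for i using xsi[OF that] assms(3) by (metis (no_types, lifting) faces_def mem_Collect_eq)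
  define c where "c = (\<lambda>i Fb. coboundary (\<lambda>H. if H = xs ! i then 1 else 0) Fb)"
  define dd where "dd = (\<lambda>i. wL (xs ! i))"
  have dd01: "dd i = 0 \<or> dd i = 1" if "i < N" for i using assms(4) xsiL[OF that] unfolding dd_def by auto
  define EK where "EK = faces (n+1) K"
  define EL where "EL = faces (n+1) L"
  have ELK: "EL \<subseteq> EK" unfolding EL_def EK_def faces_def using LK by auto
  have finEK: "finite EK" unfolding EK_def by (rule finfK)
  have wEL: "wL Fb = 0 \<or> wL Fb = 1" if "Fb \<in> EL" for Fb
    using that assms(4) unfolding EL_def faces_def by auto
  define wone where "wone = (\<lambda>_ :: 'v set. 1 :: real)"
  define MK where "MK = mat N N (\<lambda>(i,j). \<Sum>Fb\<in>EK. wone Fb * c i Fb * c j Fb)"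
  define GL where "GL = mat N N (\<lambda>(i,j). \<Sum>Fb\<in>EL. wL Fb * c i Fb * c j Fb)"
  define LM where "LM = mat N N (\<lambda>(i,j). dd i * (\<Sum>Fb\<in>EL. wL Fb * c i Fb * c j Fb))"
  define SL where "SL = mat N N (\<lambda>(i,j). dd i * dd j * (\<Sum>Fb\<in>EL. wL Fb * c i Fb * c j Fb))"
  have MKeq: "up_laplacian_mat K (\<lambda>_. 1) n = MK"
    unfolding up_laplacian_mat_def Let_def xs_def[symmetric] N_def[symmetric] MK_def
  proof (rule eq_matI)
    fix i j assume "i < dim_row (mat N N (\<lambda>(i,j). \<Sum>Fb\<in>EK. wone Fb * c i Fb * c j Fb))"
      "j < dim_col (mat N N (\<lambda>(i,j). \<Sum>Fb\<in>EK. wone Fb * c i Fb * c j Fb))"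
    then have i: "i < N" and j: "j < N" by auto
    show "mat N N (\<lambda>(i, j). up_laplacian K (\<lambda>_. 1) n (\<lambda>F. if F = xs ! j then 1 else 0) (xs ! i)) $$ (i, j) =
          mat N N (\<lambda>(i,j). \<Sum>Fb\<in>EK. wone Fb * c i Fb * c j Fb) $$ (i, j)"
      using i j lap_entry[OF finfK cxs[OF i] cxs[OF j], of "\<lambda>_. 1"]
      by (simp add: c_def wone_def EK_def)
  qed auto
  have LMeq: "up_laplacian_mat L wL n = LM"
    unfolding up_laplacian_mat_def Let_def xsL N_def[symmetric] LM_def
  proof (rule eq_matI)
    fix i j assume "i < dim_row (mat N N (\<lambda>(i,j). dd i * (\<Sum>Fb\<in>EL. wL Fb * c i Fb * c j Fb)))"
      "j < dim_col (mat N N (\<lambda>(i,j). dd i * (\<Sum>Fb\<in>EL. wL Fb * c i Fb * c j Fb)))"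
    then have i: "i < N" and j: "j < N" by auto
    show "mat N N (\<lambda>(i, j). up_laplacian L wL n (\<lambda>F. if F = xs ! j then 1 else 0) (xs ! i)) $$ (i, j) =
          mat N N (\<lambda>(i,j). dd i * (\<Sum>Fb\<in>EL. wL Fb * c i Fb * c j Fb)) $$ (i, j)"
      using i j lap_entry[OF finfL cxs[OF i] cxs[OF j], of wL] dd01[OF i]
      by (simp add: c_def dd_def EL_def)
  qed auto
  have MKc: "MK \<in> carrier_mat N N" and SLc: "SL \<in> carrier_mat N N" and LMc: "LM \<in> carrier_mat N N"
    and GLc: "GL \<in> carrier_mat N N"
    unfolding MK_def SL_def LM_def GL_def by auto
  have cp: "char_poly LM = char_poly SL"
  proof (rule char_poly_agree[OF LMc SLc, of "{i. dd i = 0}"])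
    show "LM $$ (i, j) = 0" if "i < N" "j < N" "i \<in> {i. dd i = 0}" for i j
      using that unfolding LM_def by simp
    show "SL $$ (i, j) = 0" if "i < N" "j < N" "i \<in> {i. dd i = 0}" for i j
      using that unfolding SL_def by simp
    show "LM $$ (i, j) = SL $$ (i, j)" if "i < N" "j < N" "i \<in> {i. dd i = 0} \<or> j \<notin> {i. dd i = 0}" for i j
      using that dd01[of j] unfolding LM_def SL_def by auto
  qed
  have SLsym: "SL $$ (i,j) = SL $$ (j,i)" if "i < N" "j < N" for i j
    using that unfolding SL_def by (auto simp: mult_ac)
  have MKsym: "MK $$ (i,j) = MK $$ (j,i)" if "i < N" "j < N" for i j
    using that unfolding MK_def by (auto simp: mult_ac)
  obtain Q a where Q: "Q \<in> carrier_mat N N" and QQ: "transpose_mat Q * Q = 1\<^sub>m N"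
    and SLeq: "SL = Q * diagm N a * transpose_mat Q" and as: "\<forall>i j. i \<le> j \<longrightarrow> j < N \<longrightarrow> a i \<le> a j"
    using spectral[OF SLc SLsym] by blast
  obtain R b where R: "R \<in> carrier_mat N N" and RR: "transpose_mat R * R = 1\<^sub>m N"
    and MKeq2: "MK = R * diagm N b * transpose_mat R" and bs: "\<forall>i j. i \<le> j \<longrightarrow> j < N \<longrightarrow> b i \<le> b j"
    using spectral[OF MKc MKsym] by blast
  have eL: "eigenvalues_sorted (up_laplacian_mat L wL n) = map a [0..<N]"
    unfolding LMeq eigenvalues_sorted_def cp
    using eig_sorted_spectral[OF Q QQ SLeq as] unfolding eigenvalues_sorted_def .
  have eK: "eigenvalues_sorted (up_laplacian_mat K (\<lambda>_. 1) n) = map b [0..<N]"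
    unfolding MKeq by (rule eig_sorted_spectral[OF R RR MKeq2 bs])
  have psd: "x \<bullet> (MK *\<^sub>v x) \<ge> 0" if x: "x \<in> carrier_vec N" for x
    unfolding MK_def quad_gram[OF finEK x] by (auto simp: wone_def intro!: sum_nonneg)
  have ak: "a k \<le> b k" if k: "k < N" for k
  proof -
    have bk: "b k \<ge> 0"
    proof -
      have "(R *\<^sub>v unit_vec N k) \<bullet> ((R * diagm N b * transpose_mat R) *\<^sub>v (R *\<^sub>v unit_vec N k))
          = (\<Sum>j<N. b j * (unit_vec N k $ j)^2)"
        by (rule quad_orth(1)[OF R RR unit_vec_carrier])
      also have "\<dots> = (\<Sum>j<N. if j = k then b k else 0)"
        using k by (intro sum.cong) auto
      also have "\<dots> = b k" using k by simp
      finally have "b k = (R *\<^sub>v unit_vec N k) \<bullet> (MK *\<^sub>v (R *\<^sub>v unit_vec N k))" unfolding MKeq2 by simp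
      also have "\<dots> \<ge> 0" using R by (intro psd) simp
      finally show ?thesis .
    qed
    show ?thesis
    proof (cases "a k \<le> 0")
      case True
      then show ?thesis using bk by simp
    next
      case False
      then have akpos: "a k > 0" by simp
      show ?thesis
      proof (rule core[OF Q R QQ RR as bs k])
        fix \<beta> :: "real vec" assume \<beta>c: "\<beta> \<in> carrier_vec N" and \<beta>0: "\<forall>j<k. \<beta> $ j = 0"
        define x where "x = Q *\<^sub>v \<beta>"
        have xc: "x \<in> carrier_vec N" unfolding x_def using Q \<beta>c by simp
        define \<gamma> where "\<gamma> = vec N (\<lambda>j. if k \<le> j then \<beta> $ j / a j else 0)"
        have \<gamma>c: "\<gamma> \<in> carrier_vec N" unfolding \<gamma>_def by simp
        have D\<gamma>: "diagm N a *\<^sub>v \<gamma> = \<beta>"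
        proof -
          have "diagm N a *\<^sub>v \<gamma> = vec N (\<lambda>j. a j * \<gamma> $ j)" by (rule diagm_mult_vec[OF \<gamma>c])
          also have "\<dots> = \<beta>"
          proof (rule eq_vecI)
            fix j assume "j < dim_vec \<beta>"
            then have j: "j < N" using \<beta>c by simp
            show "vec N (\<lambda>j. a j * \<gamma> $ j) $ j = \<beta> $ j"
            proof (cases "k \<le> j")
              case True
              then have "a j > 0" using as j akpos by (meson less_le_trans)
              then show ?thesis using True j by (simp add: \<gamma>_def)
            next
              case False
              then show ?thesis using j \<beta>0 by (simp add: \<gamma>_def)
            qed
          qed (use \<beta>c in simp)
          finally show ?thesis .
        qed
        have QTQ: "transpose_mat Q *\<^sub>v (Q *\<^sub>v \<gamma>) = \<gamma>"
        proof -
          have "transpose_mat Q *\<^sub>v (Q *\<^sub>v \<gamma>) = (transpose_mat Q * Q) *\<^sub>v \<gamma>"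
            using Q \<gamma>c by (simp add: assoc_mult_mat_vec[of _ N N _ N])
          also have "\<dots> = \<gamma>" using QQ \<gamma>c by simp
          finally show ?thesis .
        qed
        have xS: "x = SL *\<^sub>v (Q *\<^sub>v \<gamma>)"
        proof -
          have "SL *\<^sub>v (Q *\<^sub>v \<gamma>) = Q *\<^sub>v (diagm N a *\<^sub>v (transpose_mat Q *\<^sub>v (Q *\<^sub>v \<gamma>)))"
            unfolding SLeq using Q \<gamma>c by (simp add: assoc_mult_mat_vec[of _ N N _ N])
          then show ?thesis unfolding QTQ D\<gamma> x_def by simp
        qed
        have xz: "x $ i = 0" if i: "i < N" "dd i = 0" for i
        proof -
          have "x $ i = row SL i \<bullet> (Q *\<^sub>v \<gamma>)" unfolding xS using i SLc by simp
          also have "row SL i = 0\<^sub>v N" using i unfolding SL_def by (auto simp: row_def)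
          also have "0\<^sub>v N \<bullet> (Q *\<^sub>v \<gamma>) = 0" using Q \<gamma>c by simp
          finally show ?thesis .
        qed
        have xdd: "dd i * x $ i = x $ i" if i: "i < N" for i
          using dd01[OF i] xz[OF i] by auto
        have lhs: "x \<bullet> (SL *\<^sub>v x) = x \<bullet> (GL *\<^sub>v x)"
        proof -
          have "x \<bullet> (SL *\<^sub>v x) = (\<Sum>i<N. x $ i * (\<Sum>j<N. (dd i * dd j * (\<Sum>Fb\<in>EL. wL Fb * c i Fb * c j Fb)) * x $ j))"
            using xc by (auto simp: SL_def scalar_prod_def row_def atLeast0LessThan intro!: sum.cong)
          also have "\<dots> = (\<Sum>i<N. (dd i * x $ i) * (\<Sum>j<N. (\<Sum>Fb\<in>EL. wL Fb * c i Fb * c j Fb) * (dd j * x $ j)))"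
            by (simp add: sum_distrib_left mult_ac)
          also have "\<dots> = (\<Sum>i<N. x $ i * (\<Sum>j<N. (\<Sum>Fb\<in>EL. wL Fb * c i Fb * c j Fb) * x $ j))"
          proof (rule sum.cong[OF refl])
            fix i assume "i \<in> {..<N}"
            then have i: "i < N" by simp
            have "(\<Sum>j<N. (\<Sum>Fb\<in>EL. wL Fb * c i Fb * c j Fb) * (dd j * x $ j))
                = (\<Sum>j<N. (\<Sum>Fb\<in>EL. wL Fb * c i Fb * c j Fb) * x $ j)"
              by (rule sum.cong[OF refl]) (metis lessThan_iff xdd)
            then show "dd i * x $ i * (\<Sum>j<N. (\<Sum>Fb\<in>EL. wL Fb * c i Fb * c j Fb) * (dd j * x $ j))
                = x $ i * (\<Sum>j<N. (\<Sum>Fb\<in>EL. wL Fb * c i Fb * c j Fb) * x $ j)"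
              by (simp only: xdd[OF i])
          qed
          also have "\<dots> = x \<bullet> (GL *\<^sub>v x)"
            using xc by (auto simp: GL_def scalar_prod_def row_def atLeast0LessThan intro!: sum.cong)
          finally show ?thesis .
        qed
        have "x \<bullet> (GL *\<^sub>v x) = (\<Sum>F\<in>EL. wL F * (\<Sum>i<N. c i F * x $ i)^2)"
          unfolding GL_def by (rule quad_gram[OF finfL[of "n+1", folded EL_def] xc])
        also have "\<dots> \<le> (\<Sum>F\<in>EL. wone F * (\<Sum>i<N. c i F * x $ i)^2)"
        proof (rule sum_mono)
          fix F assume F: "F \<in> EL"
          show "wL F * (\<Sum>i<N. c i F * x $ i)^2 \<le> wone F * (\<Sum>i<N. c i F * x $ i)^2"
            using wEL[OF F] by (cases "wL F = 0") (auto simp: wone_def)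
        qed
        also have "\<dots> \<le> (\<Sum>F\<in>EK. wone F * (\<Sum>i<N. c i F * x $ i)^2)"
          by (rule sum_mono2[OF finEK ELK]) (auto simp: wone_def)
        also have "\<dots> = x \<bullet> (MK *\<^sub>v x)"
          unfolding MK_def by (rule quad_gram[OF finEK xc, symmetric])
        finally have "x \<bullet> (SL *\<^sub>v x) \<le> x \<bullet> (MK *\<^sub>v x)" using lhs by simp
        then show "(Q *\<^sub>v \<beta>) \<bullet> ((Q * diagm N a * transpose_mat Q) *\<^sub>v (Q *\<^sub>v \<beta>))
            \<le> (Q *\<^sub>v \<beta>) \<bullet> ((R * diagm N b * transpose_mat R) *\<^sub>v (Q *\<^sub>v \<beta>))"
          unfolding SLeq[symmetric] MKeq2[symmetric] x_def .
      qed
    qed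
  qed
  show ?thesis unfolding eL eK cardN using ak by simp
qed


end
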